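(* Let $f(z)=z+\sum_{n=2}^{\infty}a_nz^n$ belong to $\mathcal{S}^*_{ch}$, and let $\gamma_1=\frac12a_2$ and $\gamma_2=\frac12\big(a_3-\frac12a_2^2\big)$ be its first two logarithmic coefficients. Then $$-\frac{1}{\sqrt6}\le |\gamma_2|-|\gamma_1|\le\frac14.$$ Both inequalities are sharp (each bound is attained by some function in $\mathcal{S}^*_{ch}$).
   Context: $\mathbb{D}=\{z\in\mathbb{C}:|z|<1\}$. $\mathcal{A}$ is the class of analytic $f$ on $\mathbb{D}$ with $f(0)=0$, $f'(0)=1$. For analytic $g,h$ on $\mathbb{D}$, $g\prec h$ means there is an analytic $\omega$ on $\mathbb{D}$ with $\omega(0)=0$, $|\omega(z)|<1$, and $g=h\circ\omega$. $\mathcal{S}^*_{ch}$ is the class of $f\in\mathcal{A}$ with $\frac{zf'(z)}{f(z)}\prec z+\cosh z$ on $\mathbb{D}$. Logarithmic coefficients $\gamma_n$ are defined by $\log\frac{f(z)}{z}=2\sum_{n\ge1}\gamma_nz^n$. *)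

theory Defs
  imports "HOL-Analysis.Analysis"
begin

definition unit_disc :: "complex set" where
  "unit_disc = ball 0 1"

definition classA :: "(complex \<Rightarrow> complex) \<Rightarrow> bool" where
  "classA f \<longleftrightarrow> f holomorphic_on unit_disc \<and> f 0 = 0 \<and> deriv f 0 = 1"

definition subord :: "(complex \<Rightarrow> complex) \<Rightarrow> (complex \<Rightarrow> complex) \<Rightarrow> bool" where
  "subord g h \<longleftrightarrow> (\<exists>w. w holomorphic_on unit_disc \<and> w 0 = 0 \<and>
       (\<forall>z\<in>unit_disc. norm (w z) < 1) \<and> (\<forall>z\<in>unit_disc. g z = h (w z)))"

definition starfun :: "(complex \<Rightarrow> complex) \<Rightarrow> complex \<Rightarrow> complex" where
  "starfun f z = (if z = 0 then 1 else z * deriv f z / f z)"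

text \<open>The class S*_ch. The quotient z f'/f must be analytic on the disc, which forces
  f to have no zeros in the punctured disc.\<close>
definition S_ch :: "(complex \<Rightarrow> complex) \<Rightarrow> bool" where
  "S_ch f \<longleftrightarrow> classA f \<and> (\<forall>z\<in>unit_disc - {0}. f z \<noteq> 0) \<and>
      subord (starfun f) (\<lambda>z. z + cosh z)"

definition taylor_coeff :: "(complex \<Rightarrow> complex) \<Rightarrow> nat \<Rightarrow> complex" where
  "taylor_coeff f n = (deriv ^^ n) f 0 / fact n"

definition gamma1 :: "(complex \<Rightarrow> complex) \<Rightarrow> complex" where
  "gamma1 f = taylor_coeff f 2 / 2"

definition gamma2 :: "(complex \<Rightarrow> complex) \<Rightarrow> complex" where
  "gamma2 f = (taylor_coeff f 3 - (taylor_coeff f 2)^2 / 2) / 2"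

end

theory Submission
  imports Defs "HOL-Complex_Analysis.Complex_Analysis"
begin


lemma deriv_zero_on_open:
  assumes "open S" "z \<in> S" "\<And>x. x \<in> S \<Longrightarrow> g x = 0"
    "(g has_field_derivative D) (at z)"
  shows "D = 0"
proof -
  have "((\<lambda>x. 0) has_field_derivative D) (at z)"
    by (rule has_field_derivative_transform_within_open[OF assms(4) assms(1,2)]) (use assms(3) in auto)
  then show ?thesis using DERIV_unique DERIV_const by blast
qed

lemma coeff_lemma:
  fixes f w :: "complex \<Rightarrow> complex"
  assumes holf: "f holomorphic_on ball 0 1" and f0: "f 0 = 0" and f10: "deriv f 0 = 1"
    and holw: "w holomorphic_on ball 0 1" and w0: "w 0 = 0"
    and eq: "\<And>z. z \<in> ball 0 1 \<Longrightarrow> z * deriv f z = f z * (w z + cosh (w z))"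
  shows "taylor_coeff f 2 = deriv w 0"
    "taylor_coeff f 3 = (deriv w 0)^2/2 + ((deriv w 0)^2 + deriv (deriv w) 0)/4"
proof -
  define D where "D = ball (0::complex) 1"
  have oD: "open D" and zD: "0 \<in> D" by (auto simp: D_def)
  define P where "P = (\<lambda>z. w z + cosh (w z))"
  define f1 where "f1 = deriv f"
  define f2 where "f2 = deriv f1"
  define f3 where "f3 = deriv f2"
  define f4 where "f4 = deriv f3"
  define P1 where "P1 = deriv P"
  define P2 where "P2 = deriv P1"
  define P3 where "P3 = deriv P2"
  define w1 where "w1 = deriv w"
  define w2 where "w2 = deriv w1"
  have hf: "f holomorphic_on D" using holf by (simp add: D_def)
  have hw: "w holomorphic_on D" using holw by (simp add: D_def)
  have hP: "P holomorphic_on D" unfolding P_def cosh_def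
    by (intro holomorphic_intros hw)
  have hf1: "f1 holomorphic_on D" unfolding f1_def by (intro holomorphic_intros hf oD)
  have hf2: "f2 holomorphic_on D" unfolding f2_def by (intro holomorphic_intros hf1 oD)
  have hf3: "f3 holomorphic_on D" unfolding f3_def by (intro holomorphic_intros hf2 oD)
  have hP1: "P1 holomorphic_on D" unfolding P1_def by (intro holomorphic_intros hP oD)
  have hP2: "P2 holomorphic_on D" unfolding P2_def by (intro holomorphic_intros hP1 oD)
  have hw1: "w1 holomorphic_on D" unfolding w1_def by (intro holomorphic_intros hw oD)
  have df: "\<And>z. z \<in> D \<Longrightarrow> (f has_field_derivative f1 z) (at z)"
    unfolding f1_def by (rule holomorphic_derivI[OF hf oD])
  have df1: "\<And>z. z \<in> D \<Longrightarrow> (f1 has_field_derivative f2 z) (at z)"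
    unfolding f2_def by (rule holomorphic_derivI[OF hf1 oD])
  have df2: "\<And>z. z \<in> D \<Longrightarrow> (f2 has_field_derivative f3 z) (at z)"
    unfolding f3_def by (rule holomorphic_derivI[OF hf2 oD])
  have df3: "\<And>z. z \<in> D \<Longrightarrow> (f3 has_field_derivative f4 z) (at z)"
    unfolding f4_def by (rule holomorphic_derivI[OF hf3 oD])
  have dP: "\<And>z. z \<in> D \<Longrightarrow> (P has_field_derivative P1 z) (at z)"
    unfolding P1_def by (rule holomorphic_derivI[OF hP oD])
  have dP1: "\<And>z. z \<in> D \<Longrightarrow> (P1 has_field_derivative P2 z) (at z)"
    unfolding P2_def by (rule holomorphic_derivI[OF hP1 oD])
  have dP2: "\<And>z. z \<in> D \<Longrightarrow> (P2 has_field_derivative P3 z) (at z)"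
    unfolding P3_def by (rule holomorphic_derivI[OF hP2 oD])
  have dw: "\<And>z. z \<in> D \<Longrightarrow> (w has_field_derivative w1 z) (at z)"
    unfolding w1_def by (rule holomorphic_derivI[OF hw oD])
  have dw1: "\<And>z. z \<in> D \<Longrightarrow> (w1 has_field_derivative w2 z) (at z)"
    unfolding w2_def by (rule holomorphic_derivI[OF hw1 oD])
  have E0: "z * f1 z - f z * P z = 0" if "z \<in> D" for z
    using eq[of z] that by (simp add: D_def f1_def P_def)
  have E1: "f1 z + z * f2 z - (f1 z * P z + f z * P1 z) = 0" if "z \<in> D" for z
  proof (rule deriv_zero_on_open[OF oD that E0])
    show "((\<lambda>z. z * f1 z - f z * P z) has_field_derivative f1 z + z * f2 z - (f1 z * P z + f z * P1 z)) (at z)"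
      by (rule derivative_eq_intros df df1 dP that refl | simp add: algebra_simps)+
  qed
  have E2: "f2 z + (f2 z + z * f3 z) - (f2 z * P z + f1 z * P1 z + (f1 z * P1 z + f z * P2 z)) = 0" if "z \<in> D" for z
  proof (rule deriv_zero_on_open[OF oD that E1])
    show "((\<lambda>z. f1 z + z * f2 z - (f1 z * P z + f z * P1 z)) has_field_derivative
       f2 z + (f2 z + z * f3 z) - (f2 z * P z + f1 z * P1 z + (f1 z * P1 z + f z * P2 z))) (at z)"
      by (rule derivative_eq_intros df df1 df2 dP dP1 that refl | simp add: algebra_simps)+
  qed
  have E3: "f3 0 + (f3 0 + (f3 0 + 0 * f4 0)) - (f3 0 * P 0 + f2 0 * P1 0 + (f2 0 * P1 0 + f1 0 * P2 0)
        + (f2 0 * P1 0 + f1 0 * P2 0 + (f1 0 * P2 0 + f 0 * P3 0))) = 0"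
  proof (rule deriv_zero_on_open[OF oD zD E2])
    show "((\<lambda>z. f2 z + (f2 z + z * f3 z) - (f2 z * P z + f1 z * P1 z + (f1 z * P1 z + f z * P2 z))) has_field_derivative
      f3 0 + (f3 0 + (f3 0 + 0 * f4 0)) - (f3 0 * P 0 + f2 0 * P1 0 + (f2 0 * P1 0 + f1 0 * P2 0)
        + (f2 0 * P1 0 + f1 0 * P2 0 + (f1 0 * P2 0 + f 0 * P3 0)))) (at 0)"
      by (rule derivative_eq_intros df df1 df2 df3 dP dP1 dP2 zD refl | simp add: algebra_simps)+
  qed
  have E2': "f2 0 + (f2 0 + 0 * f3 0) - (f2 0 * P 0 + f1 0 * P1 0 + (f1 0 * P1 0 + f 0 * P2 0)) = 0"
    using E2[OF zD] by simp
  have P0: "P 0 = 1" by (simp add: P_def w0)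
  have f10': "f1 0 = 1" using f10 by (simp add: f1_def)
  have a2: "f2 0 = 2 * P1 0" using E2' by (simp add: P0 f10' f0 algebra_simps)
  have a3: "2 * f3 0 = 3 * f2 0 * P1 0 + 3 * P2 0" using E3 by (simp add: P0 f10' f0 algebra_simps)
  have P1eq: "P1 z = w1 z * (1 + sinh (w z))" if "z \<in> D" for z
  proof -
    have "(P has_field_derivative w1 z * (1 + sinh (w z))) (at z)"
      unfolding P_def by (rule derivative_eq_intros dw that refl | simp add: algebra_simps)+
    then show ?thesis using dP[OF that] DERIV_unique by blast
  qed
  have P10: "P1 0 = w1 0" using P1eq[OF zD] by (simp add: w0)
  have P20: "P2 0 = w2 0 + w1 0 ^ 2"
  proof -
    have "((\<lambda>z. w1 z * (1 + sinh (w z))) has_field_derivative w2 0 * (1 + sinh (w 0)) + w1 0 * (cosh (w 0) * w1 0)) (at 0)"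
      by (rule derivative_eq_intros dw dw1 zD refl | simp add: algebra_simps)+
    then have "(P1 has_field_derivative w2 0 * (1 + sinh (w 0)) + w1 0 * (cosh (w 0) * w1 0)) (at 0)"
      by (rule has_field_derivative_transform_within_open[OF _ oD zD]) (simp add: P1eq)
    then show ?thesis using dP1[OF zD] DERIV_unique by (fastforce simp: w0 power2_eq_square)
  qed
  have d2: "(deriv ^^ 2) f = f2" by (simp add: numeral_2_eq_2 f1_def f2_def)
  have d3: "(deriv ^^ 3) f = f3" by (simp add: numeral_3_eq_3 f1_def f2_def f3_def)
  show "taylor_coeff f 2 = deriv w 0"
    unfolding taylor_coeff_def d2 using a2 P10 by (simp add: w1_def)
  show "taylor_coeff f 3 = (deriv w 0)^2/2 + ((deriv w 0)^2 + deriv (deriv w) 0)/4"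
    unfolding taylor_coeff_def d3 using a3 a2 P10 P20 
    by (simp add: w1_def w2_def fact_numeral field_simps power2_eq_square)
qed



lemma schwarz_coeff:
  fixes w :: "complex \<Rightarrow> complex"
  assumes holw: "w holomorphic_on ball 0 1" and w0: "w 0 = 0"
    and lt: "\<And>z. norm z < 1 \<Longrightarrow> norm (w z) < 1"
  shows "norm (deriv w 0) \<le> 1" "norm (deriv (deriv w) 0) / 2 \<le> 1 - norm (deriv w 0)^2"
proof -
  define D where "D = ball (0::complex) 1"
  have oD: "open D" and zD: "0 \<in> D" by (auto simp: D_def)
  have hw: "w holomorphic_on D" using holw by (simp add: D_def)
  define h where "h = (\<lambda>z. if z = 0 then deriv w 0 else (w z - w 0) / (z - 0))"
  have hh: "h holomorphic_on D" unfolding h_def by (rule pole_lemma_open[OF hw oD])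
  define h1 where "h1 = deriv h"
  define h2 where "h2 = deriv h1"
  have hh1: "h1 holomorphic_on D" unfolding h1_def by (intro holomorphic_intros hh oD)
  have dh: "\<And>z. z \<in> D \<Longrightarrow> (h has_field_derivative h1 z) (at z)"
    unfolding h1_def by (rule holomorphic_derivI[OF hh oD])
  have dh1: "\<And>z. z \<in> D \<Longrightarrow> (h1 has_field_derivative h2 z) (at z)"
    unfolding h2_def by (rule holomorphic_derivI[OF hh1 oD])
  have dw: "\<And>z. z \<in> D \<Longrightarrow> (w has_field_derivative deriv w z) (at z)"
    by (rule holomorphic_derivI[OF hw oD])
  have wz: "w z = z * h z" if "z \<in> D" for z
    by (simp add: h_def w0)
  have dwz: "deriv w z = h z + z * h1 z" if "z \<in> D" for z
  proof -
    have "((\<lambda>z. z * h z) has_field_derivative h z + z * h1 z) (at z)"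
      by (rule derivative_eq_intros dh that refl | simp)+
    then have "(w has_field_derivative h z + z * h1 z) (at z)"
      by (rule has_field_derivative_transform_within_open[OF _ oD that]) (simp add: wz)
    then show ?thesis using dw[OF that] DERIV_unique by blast
  qed
  have w10: "deriv w 0 = h 0" using dwz[OF zD] by simp
  have w20: "deriv (deriv w) 0 = 2 * h1 0"
  proof -
    have "((\<lambda>z. h z + z * h1 z) has_field_derivative h1 0 + (h1 0 + 0 * h2 0)) (at 0)"
      by (rule derivative_eq_intros dh dh1 zD refl | simp)+
    then have "(deriv w has_field_derivative h1 0 + (h1 0 + 0 * h2 0)) (at 0)"
      by (rule has_field_derivative_transform_within_open[OF _ oD zD]) (simp add: dwz)
    then show ?thesis by (simp add: DERIV_imp_deriv)
  qed
  have S1: "norm (w \<xi>) \<le> norm \<xi>" if "norm \<xi> < 1" for \<xi>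
    using Schwarz_Lemma(1)[OF holw w0 lt that] .
  have S2: "norm (deriv w 0) \<le> 1"
    using Schwarz_Lemma(2)[OF holw w0 lt, of 0] by simp
  have S3: "\<exists>\<alpha>. (\<forall>z. norm z < 1 \<longrightarrow> w z = \<alpha> * z) \<and> norm \<alpha> = 1"
    if "(\<exists>z. norm z < 1 \<and> z \<noteq> 0 \<and> norm (w z) = norm z) \<or> norm (deriv w 0) = 1"
    using Schwarz_Lemma(3)[OF holw w0 lt, of 0] that by simp
  have K: "norm (h 0) = 1 \<and> h1 0 = 0" if ex: "\<exists>\<alpha>. (\<forall>z. norm z < 1 \<longrightarrow> w z = \<alpha> * z) \<and> norm \<alpha> = 1"
  proof -
    obtain \<alpha> where al: "\<And>z. norm z < 1 \<Longrightarrow> w z = \<alpha> * z" and na: "norm \<alpha> = 1" using ex by blast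
    have hc: "h z = \<alpha>" if "z \<in> D" for z
    proof (cases "z = 0")
      case True
      have "((\<lambda>z. \<alpha> * z) has_field_derivative \<alpha>) (at 0)"
        by (rule derivative_eq_intros refl | simp)+
      then have "(w has_field_derivative \<alpha>) (at 0)"
        by (rule has_field_derivative_transform_within_open[OF _ oD zD]) (simp add: al D_def)
      then show ?thesis using True w10 by (simp add: DERIV_imp_deriv)
    next
      case False
      then show ?thesis using that al[of z] by (simp add: h_def w0 D_def)
    qed
    have "((\<lambda>z. \<alpha>) has_field_derivative 0) (at 0)" by simp
    then have "(h has_field_derivative 0) (at 0)"
      by (rule has_field_derivative_transform_within_open[OF _ oD zD]) (simp add: hc)
    then have "h1 0 = 0" using dh[OF zD] DERIV_unique by blast
    then show ?thesis using hc[OF zD] na by simp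
  qed
  have hle: "norm (h z) \<le> 1" if "z \<in> D" for z
  proof (cases "z = 0")
    case True then show ?thesis using S2 w10 by simp
  next
    case False
    then have "norm (w z) \<le> norm z" using S1 that by (simp add: D_def)
    then show ?thesis using False wz[OF that] by (simp add: norm_mult)
  qed
  have main: "norm (h1 0) \<le> 1 - norm (h 0)^2"
  proof (cases "norm (h 0) = 1")
    case True
    then have "h1 0 = 0" using K S3 w10 by auto
    then show ?thesis using True by simp
  next
    case False
    define a where "a = h 0"
    have na: "norm a < 1" using False hle[OF zD] by (simp add: a_def)
    have hlt: "norm (h z) < 1" if "z \<in> D" for z
    proof (rule ccontr)
      assume "\<not> norm (h z) < 1"
      then have e: "norm (h z) = 1" using hle[OF that] by simp
      then have "z \<noteq> 0" using False by auto
      moreover have "norm (w z) = norm z" using e wz[OF that] by (simp add: norm_mult)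
      ultimately have "norm (h 0) = 1" using K S3 that by (auto simp: D_def)
      then show False using False by simp
    qed
    define k where "k = (\<lambda>z. Moebius_function 0 a (h z))"
    have den: "1 - cnj a * h z \<noteq> 0" if "z \<in> D" for z
    proof
      assume "1 - cnj a * h z = 0"
      then have "norm (cnj a * h z) = 1" by (metis eq_iff_diff_eq_0 norm_one)
      moreover have "norm (cnj a * h z) < 1"
      proof -
        have "norm a * norm (h z) \<le> norm a" using hlt[OF that] by (intro mult_left_le) auto
        then show ?thesis using na by (simp add: norm_mult)
      qed
      ultimately show False by simp
    qed
    have kexp: "k z = (h z - a) / (1 - cnj a * h z)" for z
      by (simp add: k_def Moebius_function_simple)
    have hk: "k holomorphic_on ball 0 1"
      unfolding kexp D_def[symmetric] by (intro holomorphic_intros hh) (use den in auto)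
    have k0: "k 0 = 0" by (simp add: kexp a_def)
    have klt: "norm (k z) < 1" if "norm z < 1" for z
      unfolding k_def by (rule Moebius_function_norm_lt_1[OF na hlt]) (use that in \<open>simp add: D_def\<close>)
    have dk: "(k has_field_derivative h1 0 / (1 - cnj a * a)) (at 0)"
    proof -
      have d0: "1 - cnj a * a \<noteq> 0" using den[OF zD] by (simp add: a_def)
      have "((\<lambda>z. (h z - a) / (1 - cnj a * h z)) has_field_derivative
         (h1 0 * (1 - cnj a * h 0) - (h 0 - a) * (- (cnj a * h1 0))) / (1 - cnj a * h 0)^2) (at 0)"
        by (rule derivative_eq_intros dh zD refl | use den[OF zD] in \<open>simp add: power2_eq_square\<close>)+
      moreover have "(h1 0 * (1 - cnj a * h 0) - (h 0 - a) * (- (cnj a * h1 0))) / (1 - cnj a * h 0)^2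
          = h1 0 / (1 - cnj a * a)"
      proof -
        have "(h1 0 * (1 - cnj a * h 0) - (h 0 - a) * (- (cnj a * h1 0))) = h1 0 * (1 - cnj a * a)"
          by (simp add: a_def)
        then show ?thesis using d0 by (simp add: a_def power2_eq_square)
      qed
      ultimately show ?thesis unfolding kexp[abs_def] by simp
    qed
    have "norm (deriv k 0) \<le> 1" using Schwarz_Lemma(2)[OF hk k0 klt, of 0] by simp
    then have "norm (h1 0 / (1 - cnj a * a)) \<le> 1" using dk by (simp add: DERIV_imp_deriv)
    moreover have "cnj a * a = of_real (norm a ^ 2)" using complex_norm_square[of a] by (simp add: mult.commute)
    moreover have "0 < 1 - norm a ^ 2" using na by (simp add: power_less_one_iff abs_square_less_1)
    moreover have "1 - cnj a * a = of_real (1 - norm a ^ 2)"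
      using \<open>cnj a * a = of_real (norm a ^ 2)\<close> by simp
    ultimately have "norm (h1 0) / (1 - norm a ^ 2) \<le> 1"
      using \<open>0 < 1 - norm a ^ 2\<close> by (simp add: norm_divide del: of_real_diff)
    then show ?thesis using \<open>0 < 1 - norm a ^ 2\<close> by (simp add: a_def field_simps)
  qed
  show "norm (deriv w 0) \<le> 1" by (rule S2)
  show "norm (deriv (deriv w) 0) / 2 \<le> 1 - norm (deriv w 0)^2"
    using main by (simp add: w10 w20 norm_mult)
qed



lemma construct:
  fixes w :: "complex \<Rightarrow> complex"
  assumes holw: "w holomorphic_on ball 0 1" and w0: "w 0 = 0"
    and lt: "\<And>z. norm z < 1 \<Longrightarrow> norm (w z) < 1"
  shows "\<exists>f. S_ch f \<and> (\<forall>z\<in>ball 0 1. z * deriv f z = f z * (w z + cosh (w z)))"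
proof -
  define D where "D = ball (0::complex) 1"
  have oD: "open D" and zD: "0 \<in> D" and cD: "convex D" by (auto simp: D_def)
  have hw: "w holomorphic_on D" using holw by (simp add: D_def)
  define P where "P = (\<lambda>z. w z + cosh (w z))"
  have hP: "P holomorphic_on D" unfolding P_def cosh_def
    by (intro holomorphic_intros hw)
  have P0: "P 0 = 1" by (simp add: P_def w0)
  define q where "q = (\<lambda>z. if z = 0 then deriv P 0 else (P z - P 0) / (z - 0))"
  have hq: "q holomorphic_on D" unfolding q_def by (rule pole_lemma_open[OF hP oD])
  obtain g where dg0: "\<And>x. x \<in> D \<Longrightarrow> (g has_field_derivative q x) (at x within D)"
    using holomorphic_convex_primitive'[OF cD oD hq] by blast
  have dg: "(g has_field_derivative q x) (at x)" if "x \<in> D" for x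
    using dg0[OF that] at_within_open[OF that oD] by simp
  have Pq: "1 + x * q x = P x" for x
    by (cases "x = 0") (auto simp: q_def P0)
  define f where "f = (\<lambda>z. z * exp (g z - g 0))"
  have df: "(f has_field_derivative exp (g x - g 0) * P x) (at x)" if "x \<in> D" for x
  proof -
    have "(f has_field_derivative exp (g x - g 0) + x * (exp (g x - g 0) * (q x - 0))) (at x)"
      unfolding f_def by (rule derivative_eq_intros dg that refl | simp)+
    moreover have "exp (g x - g 0) + x * (exp (g x - g 0) * (q x - 0)) = exp (g x - g 0) * P x"
      using Pq[of x] by (simp add: algebra_simps flip: Pq)
    ultimately show ?thesis by simp
  qed
  have derf: "deriv f x = exp (g x - g 0) * P x" if "x \<in> D" for x
    using df[OF that] by (simp add: DERIV_imp_deriv)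
  have hf: "f holomorphic_on D"
    using df by (auto simp: holomorphic_on_open[OF oD])
  have f0: "f 0 = 0" by (simp add: f_def)
  have f10: "deriv f 0 = 1" using derf[OF zD] by (simp add: P0)
  have fnz: "f z \<noteq> 0" if "z \<noteq> 0" for z using that by (simp add: f_def)
  have eq: "z * deriv f z = f z * P z" if "z \<in> D" for z
    using derf[OF that] by (simp add: f_def)
  have "S_ch f"
    unfolding S_ch_def classA_def subord_def
  proof (intro conjI)
    show "f holomorphic_on unit_disc" using hf by (simp add: unit_disc_def D_def)
    show "f 0 = 0" "deriv f 0 = 1" by (fact f0, fact f10)
    show "\<forall>z\<in>unit_disc - {0}. f z \<noteq> 0" using fnz by auto
    show "\<exists>w. w holomorphic_on unit_disc \<and> w 0 = 0 \<and> (\<forall>z\<in>unit_disc. cmod (w z) < 1) \<and>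
        (\<forall>z\<in>unit_disc. starfun f z = w z + cosh (w z))"
    proof (intro exI conjI ballI)
      show "w holomorphic_on unit_disc" "w 0 = 0" using holw w0 by (auto simp: unit_disc_def)
      fix z assume z: "z \<in> unit_disc"
      then show "cmod (w z) < 1" using lt by (simp add: unit_disc_def)
      show "starfun f z = w z + cosh (w z)"
      proof (cases "z = 0")
        case True then show ?thesis by (simp add: starfun_def w0)
      next
        case False
        then show ?thesis using eq[of z] z fnz[OF False]
          by (simp add: starfun_def unit_disc_def D_def P_def field_simps)
      qed
    qed
  qed
  then show ?thesis using eq by (auto simp: D_def P_def)
qed

lemma S_ch_schwarz:
  assumes "S_ch f"
  shows "\<exists>w. w holomorphic_on ball 0 1 \<and> w 0 = 0 \<and> (\<forall>z. norm z < 1 \<longrightarrow> norm (w z) < 1) \<and>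
    f holomorphic_on ball 0 1 \<and> f 0 = 0 \<and> deriv f 0 = 1 \<and>
    (\<forall>z\<in>ball 0 1. z * deriv f z = f z * (w z + cosh (w z)))"
proof -
  from assms obtain w where hf: "f holomorphic_on ball 0 1" and f0: "f 0 = 0" and f10: "deriv f 0 = 1"
    and nz: "\<forall>z\<in>ball 0 1 - {0}. f z \<noteq> 0" and hw: "w holomorphic_on ball 0 1" and w0: "w 0 = 0"
    and lt: "\<forall>z\<in>ball 0 1. norm (w z) < 1" and st: "\<forall>z\<in>ball 0 1. starfun f z = w z + cosh (w z)"
    unfolding S_ch_def classA_def subord_def unit_disc_def by blast
  have "z * deriv f z = f z * (w z + cosh (w z))" if "z \<in> ball 0 1" for z
  proof (cases "z = 0")
    case True then show ?thesis by (simp add: f0)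
  next
    case False
    then have "f z \<noteq> 0" using nz that by auto
    have "z * deriv f z / f z = w z + cosh (w z)" using bspec[OF st that] False by (simp add: starfun_def)
    then show ?thesis using \<open>f z \<noteq> 0\<close> by (simp add: field_simps)
  qed
  then show ?thesis using hf f0 f10 hw w0 lt by auto
qed



lemma gam:
  fixes f w :: "complex \<Rightarrow> complex"
  assumes "S_ch f" "w holomorphic_on ball 0 1" "w 0 = 0"
    "\<forall>z\<in>ball 0 1. z * deriv f z = f z * (w z + cosh (w z))"
  shows "gamma1 f = deriv w 0 / 2" "gamma2 f = ((deriv w 0)^2 + deriv (deriv w) 0) / 8"
proof -
  have hf: "f holomorphic_on ball 0 1" "f 0 = 0" "deriv f 0 = 1"
    using assms(1) by (auto simp: S_ch_def classA_def unit_disc_def)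
  note c = coeff_lemma[OF hf assms(2,3)] 
  have c2: "taylor_coeff f 2 = deriv w 0" by (rule c(1)) (use assms(4) in auto)
  have c3: "taylor_coeff f 3 = (deriv w 0)^2/2 + ((deriv w 0)^2 + deriv (deriv w) 0)/4"
    by (rule c(2)) (use assms(4) in auto)
  show "gamma1 f = deriv w 0 / 2" by (simp add: gamma1_def c2)
  show "gamma2 f = ((deriv w 0)^2 + deriv (deriv w) 0) / 8"
    by (simp add: gamma2_def c2 c3 field_simps)
qed

lemma ineq:
  fixes a W :: complex
  assumes a1: "norm a \<le> 1" and aW: "norm W / 2 \<le> 1 - norm a ^ 2"
  shows "- 1 / sqrt 6 \<le> norm ((a^2 + W) / 8) - norm (a / 2)"
    "norm ((a^2 + W) / 8) - norm (a / 2) \<le> 1 / 4"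
proof -
  define t where "t = norm a"
  define s where "s = norm (a^2 + W)"
  have t0: "0 \<le> t" and s0: "0 \<le> s" by (auto simp: t_def s_def)
  have sup: "s \<le> t^2 + norm W" unfolding s_def t_def
    by (metis norm_power norm_triangle_ineq)
  have slo: "t^2 - norm W \<le> s" unfolding s_def t_def
    by (metis norm_diff_ineq norm_power)
  have e: "norm ((a^2 + W) / 8) - norm (a / 2) = s / 8 - t / 2"
    by (simp add: s_def t_def norm_divide)
  show "norm ((a^2 + W) / 8) - norm (a / 2) \<le> 1 / 4"
    unfolding e using sup aW t0 zero_le_power2[of t] unfolding t_def[symmetric] by linarith
  define u where "u = 2 / sqrt 6"
  have s6: "sqrt 6 ^ 2 = 6" by simp
  have u0: "0 < u" by (simp add: u_def)
  have u2: "u^2 = 2/3" by (simp add: u_def power_divide)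
  have u23: "2/3 < u"
  proof (rule ccontr)
    assume "\<not> 2/3 < u"
    then have "u^2 \<le> (2/3)^2" using u0 by (intro power_mono) auto
    then show False using u2 by (simp add: power2_eq_square)
  qed
  have us: "1 / sqrt 6 = u / 2" by (simp add: u_def)
  have "4 * (t - u) \<le> s"
  proof (cases "t \<le> u")
    case True then show ?thesis using s0 by simp
  next
    case False
    have "0 \<le> (t - u) * (3 * t + 3 * u - 4)"
      using False u23 by (intro mult_nonneg_nonneg) auto
    moreover have "3 * t^2 - 2 \<le> s" using slo aW unfolding t_def[symmetric] by simp
    ultimately show ?thesis using u2 by (simp add: algebra_simps power2_eq_square)
  qed
  then show "- 1 / sqrt 6 \<le> norm ((a^2 + W) / 8) - norm (a / 2)"
    unfolding e using us by simp
qed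



lemma extremal1: "\<exists>f. S_ch f \<and> norm (gamma2 f) - norm (gamma1 f) = 1 / 4"
proof -
  define w where "w = (\<lambda>z::complex. z^2)"
  have hw: "w holomorphic_on ball 0 1" unfolding w_def by (intro holomorphic_intros)
  have w0: "w 0 = 0" by (simp add: w_def)
  have lt: "norm (w z) < 1" if "norm z < 1" for z
    using that by (simp add: w_def norm_power power_less_one_iff abs_square_less_1)
  have dw: "deriv w = (\<lambda>z. 2 * z)"
  proof
    fix z :: complex
    have "(w has_field_derivative 2 * z) (at z)" unfolding w_def
      by (rule derivative_eq_intros refl | simp)+
    then show "deriv w z = 2 * z" by (rule DERIV_imp_deriv)
  qed
  have dw2: "deriv (deriv w) 0 = 2" unfolding dw
    by (rule DERIV_imp_deriv) (rule derivative_eq_intros refl | simp)+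
  obtain f where f: "S_ch f" "\<forall>z\<in>ball 0 1. z * deriv f z = f z * (w z + cosh (w z))"
    using construct[OF hw w0 lt] by blast
  note g = gam[OF f(1) hw w0 f(2)]
  show ?thesis
    by (intro exI[of _ f] conjI f(1)) (simp add: g dw dw2)
qed

lemma extremal2: "\<exists>f. S_ch f \<and> norm (gamma2 f) - norm (gamma1 f) = - 1 / sqrt 6"
proof -
  define ar :: real where "ar = 2 / sqrt 6"
  define a :: complex where "a = of_real ar"
  have ar2: "ar^2 = 2/3" by (simp add: ar_def power_divide)
  have ar0: "0 < ar" by (simp add: ar_def)
  have ar1: "ar < 1"
  proof (rule ccontr)
    assume "\<not> ar < 1"
    then have "1^2 \<le> ar^2" by (intro power_mono) auto
    then show False using ar2 by simp
  qed
  have na: "norm a < 1" using ar0 ar1 by (simp add: a_def)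
  have cnja: "cnj a = a" by (simp add: a_def)
  define D where "D = ball (0::complex) 1"
  have oD: "open D" and zD: "0 \<in> D" by (auto simp: D_def)
  have den: "1 - a * z \<noteq> 0" if "z \<in> D" for z
  proof
    assume "1 - a * z = 0"
    then have "norm (a * z) = 1" by (metis eq_iff_diff_eq_0 norm_one)
    moreover have "norm (a * z) < 1"
    proof -
      have "norm a * norm z \<le> norm a" using that by (intro mult_left_le) (auto simp: D_def)
      then show ?thesis using na by (simp add: norm_mult)
    qed
    ultimately show False by simp
  qed
  define m where "m = (\<lambda>z. (a - z) / (1 - a * z))"
  define m1 where "m1 = (\<lambda>z. (a^2 - 1) / (1 - a * z)^2)"
  define w where "w = (\<lambda>z. z * m z)"
  have hw: "w holomorphic_on ball 0 1" unfolding w_def m_def D_def[symmetric]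
    by (intro holomorphic_intros) (use den in auto)
  have w0: "w 0 = 0" by (simp add: w_def)
  have lt: "norm (w z) < 1" if "norm z < 1" for z
  proof -
    have "m z = - Moebius_function 0 a z" by (simp add: m_def Moebius_function_simple cnja minus_divide_left)
    then have "norm (m z) < 1" using Moebius_function_norm_lt_1[OF na that, of 0] by simp
    then have "norm z * norm (m z) < 1 * 1" using that by (intro mult_strict_mono') auto
    then show ?thesis by (simp add: w_def norm_mult)
  qed
  have dm: "(m has_field_derivative m1 z) (at z)" if "z \<in> D" for z
  proof -
    have "(m has_field_derivative (- (1 - a * z) - (a - z) * (- a)) / (1 - a * z)^2) (at z)"
      unfolding m_def by (rule derivative_eq_intros refl | use den[OF that] in \<open>simp add: power2_eq_square\<close>)+
    moreover have "(- (1 - a * z) - (a - z) * (- a)) = a^2 - 1" by (simp add: algebra_simps power2_eq_square)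
    ultimately show ?thesis unfolding m1_def by (metis (no_types, lifting))
  qed
  have dm1: "(m1 has_field_derivative (a^2 - 1) * (2 * a * (1 - a * z)) / ((1 - a * z)^2)^2) (at z)" if "z \<in> D" for z
    unfolding m1_def by (rule derivative_eq_intros refl | use den[OF that] in \<open>simp\<close>)+
  have dwz: "deriv w z = m z + z * m1 z" if "z \<in> D" for z
  proof -
    have "(w has_field_derivative m z + z * m1 z) (at z)" unfolding w_def
      by (rule derivative_eq_intros dm that refl | simp)+
    then show ?thesis by (rule DERIV_imp_deriv)
  qed
  have w10: "deriv w 0 = a" using dwz[OF zD] by (simp add: m_def)
  have w20: "deriv (deriv w) 0 = 2 * (a^2 - 1)"
  proof -
    have "((\<lambda>z. m z + z * m1 z) has_field_derivative m1 0 + (m1 0 + 0 * ((a^2 - 1) * (2 * a * (1 - a * 0)) / ((1 - a * 0)^2)^2))) (at 0)"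
      by (rule derivative_eq_intros dm dm1 zD refl | simp)+
    then have "(deriv w has_field_derivative m1 0 + (m1 0 + 0 * ((a^2 - 1) * (2 * a * (1 - a * 0)) / ((1 - a * 0)^2)^2))) (at 0)"
      by (rule has_field_derivative_transform_within_open[OF _ oD zD]) (simp add: dwz)
    then show ?thesis by (simp add: DERIV_imp_deriv m1_def)
  qed
  obtain f where f: "S_ch f" "\<forall>z\<in>ball 0 1. z * deriv f z = f z * (w z + cosh (w z))"
    using construct[OF hw w0 lt] by blast
  note g = gam[OF f(1) hw w0 f(2)]
  have a2: "a^2 = 2/3" unfolding a_def using ar2 by (metis of_real_divide of_real_numeral of_real_power)
  have g2: "gamma2 f = 0" by (simp add: g w10 w20 a2)
  have g1: "norm (gamma1 f) = 1 / sqrt 6" by (simp add: g w10 a_def ar_def norm_divide)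
  show ?thesis
    by (intro exI[of _ f] conjI f(1)) (simp add: g1 g2)
qed

theorem theorem4p1:
  shows "(\<forall>f. S_ch f \<longrightarrow>
            - 1 / sqrt 6 \<le> norm (gamma2 f) - norm (gamma1 f) \<and>
            norm (gamma2 f) - norm (gamma1 f) \<le> 1 / 4)
       \<and> (\<exists>f. S_ch f \<and> norm (gamma2 f) - norm (gamma1 f) = 1 / 4)
       \<and> (\<exists>f. S_ch f \<and> norm (gamma2 f) - norm (gamma1 f) = - 1 / sqrt 6)"
proof (intro conjI allI impI extremal1 extremal2)
  fix f assume sf: "S_ch f"
  then obtain w where hw: "w holomorphic_on ball 0 1" and w0: "w 0 = 0"
    and lt: "\<forall>z. norm z < 1 \<longrightarrow> norm (w z) < 1"
    and eq: "\<forall>z\<in>ball 0 1. z * deriv f z = f z * (w z + cosh (w z))"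
    using S_ch_schwarz by blast
  note g = gam[OF sf hw w0 eq]
  note sc = schwarz_coeff[OF hw w0] 
  have s1: "norm (deriv w 0) \<le> 1" by (rule sc(1)) (use lt in auto)
  have s2: "norm (deriv (deriv w) 0) / 2 \<le> 1 - norm (deriv w 0)^2" by (rule sc(2)) (use lt in auto)
  note i = ineq[OF s1 s2]
  show "- 1 / sqrt 6 \<le> norm (gamma2 f) - norm (gamma1 f)" using i(1) by (simp add: g)
  show "norm (gamma2 f) - norm (gamma1 f) \<le> 1 / 4" using i(2) by (simp add: g)
qed

end
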